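(* (i) For every $\hat{\mathbf u}\in\mathbf W$, any $\psi\in\Phi$ satisfying $(\kappa(\psi),\varphi)+c(\hat{\mathbf u};\psi,\varphi)+d(\psi,\varphi)=G(\varphi)$ for all $\varphi\in\Phi_0$ obeys $\|\psi\|_{1,\Omega}\le 2C_p^2\varepsilon^{-1}\|g\|_{0,\Omega}$. (ii) For every $\hat\psi\in\mathrm Z$, any $(\mathbf u,p)\in\mathbf V\times Q$ satisfying $a(\mathbf u,\mathbf v)+A^{\hat\psi}(\mathbf u,\mathbf v)+b(\mathbf v,p)=F^{\hat\psi}(\mathbf v)$ for all $\mathbf v\in\mathbf V$ and $b(\mathbf u,q)=0$ for all $q\in Q$ obeys $\|\mathbf u\|_{1,\Omega}\le 2C_p^2\mu^{-1}\bigl(\|\mathbf f\|_{0,\Omega}+\bar E\|g\|_{0,\Omega}+\bar K\bar E\|\hat\psi\|_{1,\Omega}\bigr)$.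
   Context: Let $\Omega\subset\mathbb R^n$, $n\in\{2,3\}$, be a bounded Lipschitz domain with $\partial\Omega=\Gamma_D\cup\Gamma_N$, $\Gamma_D$ of positive surface measure. $\|\cdot\|_{0,\Omega}$ is the $L^2(\Omega)$ norm, $\|\cdot\|_{1,\Omega}$, $|\cdot|_{1,\Omega}$ the $H^1(\Omega)$ norm and seminorm; $(\cdot,\cdot)$ the $L^2$ inner product. Data: $\mu>0$, $\varepsilon>0$, $\mathbf f\in L^2(\Omega)^n$, $g\in L^2(\Omega)$, $\mathbf E\in L^\infty(\Omega)^n$ with $|\mathbf E|\le\bar E$ a.e.; $\kappa(s)=k_0\sinh(k_1s)$, $k_0,k_1>0$; fixed reals $\alpha\le0\le\beta$ and constants $\bar K,\underline K>0$ with $\underline K|s_1-s_2|\le|\kappa(s_1)-\kappa(s_2)|\le\bar K|s_1-s_2|$ for $s_1,s_2\in[\alpha,\beta]$. $C_{Sob}>0$ satisfies $\|\phi\|_{L^4(\Omega)}\le C_{Sob}\|\phi\|_{1,\Omega}$ for all $\phi\in H^1(\Omega)$; $C_p>0$ satisfies $\|\phi\|_{1,\Omega}\le C_p|\phi|_{1,\Omega}$ for all $\phi\in H^1(\Omega)$ (or $H^1(\Omega)^n$) vanishing on $\Gamma_D$. $\mathbf V=\{\mathbf v\in H^1(\Omega)^n:\mathbf v=\mathbf 0\text{ on }\Gamma_D\}$, $\Phi_0=\{\varphi\in H^1(\Omega):\varphi=0\text{ on }\Gamma_D\}$, $\Phi=\{\varphi\in\Phi_0:\alpha\le\varphi\le\beta\text{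 a.e.}\}$, $Q=L^2(\Omega)$. Forms: $a(\mathbf u,\mathbf v)=\mu\int_\Omega\nabla\mathbf u:\nabla\mathbf v$, $b(\mathbf v,q)=-\int_\Omega(\operatorname{div}\mathbf v)q$, $c(\mathbf v;\psi,\varphi)=\int_\Omega(\mathbf v\cdot\nabla\psi)\varphi$, $d(\psi,\varphi)=\varepsilon\int_\Omega\nabla\psi\cdot\nabla\varphi$, $A^{\hat\psi}(\mathbf u,\mathbf v)=\int_\Omega(\mathbf u\cdot\nabla\hat\psi)(\mathbf E\cdot\mathbf v)$, $F^{\hat\psi}(\mathbf v)=\int_\Omega\{\mathbf f+[g-\kappa(\hat\psi)]\mathbf E\}\cdot\mathbf v$, $G(\varphi)=\int_\Omega g\varphi$. $\mathrm Z=\{\hat\psi\in\Phi:\|\hat\psi\|_{1,\Omega}\le\mu[2C_p^2C_{Sob}^2\bar E]^{-1}\}$, $\mathbf W=\{\hat{\mathbf u}\in\mathbf V:\|\hat{\mathbf u}\|_{1,\Omega}\le\varepsilon[2C_p^2C_{Sob}^2]^{-1}\}$. *)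

theory Defs
  imports "HOL-Analysis.Analysis"
begin

definition intO :: "(real^'n) set \<Rightarrow> (real^'n \<Rightarrow> real) \<Rightarrow> real" where
  "intO \<Omega> f = set_lebesgue_integral lebesgue \<Omega> f"

definition L2 :: "(real^'n) set \<Rightarrow> (real^'n \<Rightarrow> real) \<Rightarrow> bool" where
  "L2 \<Omega> f \<longleftrightarrow> set_borel_measurable lebesgue \<Omega> f \<and> set_integrable lebesgue \<Omega> (\<lambda>x. (f x)^2)"

definition L2norm :: "(real^'n) set \<Rightarrow> (real^'n \<Rightarrow> real) \<Rightarrow> real" where
  "L2norm \<Omega> f = sqrt (intO \<Omega> (\<lambda>x. (f x)^2))"

definition L2normv :: "(real^'n) set \<Rightarrow> (real^'n \<Rightarrow> real^'n) \<Rightarrow> real" where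
  "L2normv \<Omega> f = sqrt (intO \<Omega> (\<lambda>x. (norm (f x))^2))"

text \<open>C-infinity functions on the whole space (all partial derivatives of all orders exist and
  are continuous), via a coinductive characterisation.\<close>
definition pderiv_at :: "'n \<Rightarrow> (real^'n \<Rightarrow> real) \<Rightarrow> real^'n \<Rightarrow> real" where
  "pderiv_at i \<phi> x = frechet_derivative \<phi> (at x) (axis i 1)"

coinductive Cinf :: "(real^'n \<Rightarrow> real) \<Rightarrow> bool" where
  "\<phi> differentiable_on UNIV \<Longrightarrow> (\<forall>i. Cinf (pderiv_at i \<phi>)) \<Longrightarrow> Cinf \<phi>"

definition supp :: "(real^'n \<Rightarrow> real) \<Rightarrow> (real^'n) set" where
  "supp \<phi> = closure {x. \<phi> x \<noteq> 0}"

definition test_fun :: "(real^'n) set \<Rightarrow> (real^'n \<Rightarrow> real) \<Rightarrow> bool" where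
  "test_fun \<Omega> \<phi> \<longleftrightarrow> Cinf \<phi> \<and> compact (supp \<phi>) \<and> supp \<phi> \<subseteq> \<Omega>"

definition weak_grad :: "(real^'n) set \<Rightarrow> (real^'n \<Rightarrow> real) \<Rightarrow> (real^'n \<Rightarrow> real^'n) \<Rightarrow> bool" where
  "weak_grad \<Omega> u G \<longleftrightarrow> (\<forall>i. L2 \<Omega> (\<lambda>x. G x $ i)) \<and>
     (\<forall>\<phi>. test_fun \<Omega> \<phi> \<longrightarrow> (\<forall>i. intO \<Omega> (\<lambda>x. u x * pderiv_at i \<phi> x) = - intO \<Omega> (\<lambda>x. G x $ i * \<phi> x)))"

definition H1 :: "(real^'n) set \<Rightarrow> (real^'n \<Rightarrow> real) \<Rightarrow> bool" where
  "H1 \<Omega> u \<longleftrightarrow> L2 \<Omega> u \<and> (\<exists>G. weak_grad \<Omega> u G)"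

definition wgrad :: "(real^'n) set \<Rightarrow> (real^'n \<Rightarrow> real) \<Rightarrow> real^'n \<Rightarrow> real^'n" where
  "wgrad \<Omega> u = (SOME G. weak_grad \<Omega> u G)"

definition H1semi :: "(real^'n) set \<Rightarrow> (real^'n \<Rightarrow> real) \<Rightarrow> real" where
  "H1semi \<Omega> u = sqrt (intO \<Omega> (\<lambda>x. (norm (wgrad \<Omega> u x))^2))"

definition H1norm :: "(real^'n) set \<Rightarrow> (real^'n \<Rightarrow> real) \<Rightarrow> real" where
  "H1norm \<Omega> u = sqrt ((L2norm \<Omega> u)^2 + (H1semi \<Omega> u)^2)"

definition comp :: "(real^'n \<Rightarrow> real^'n) \<Rightarrow> 'n \<Rightarrow> real^'n \<Rightarrow> real" where
  "comp v i = (\<lambda>x. v x $ i)"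

definition H1v :: "(real^'n) set \<Rightarrow> (real^'n \<Rightarrow> real^'n) \<Rightarrow> bool" where
  "H1v \<Omega> v \<longleftrightarrow> (\<forall>i. H1 \<Omega> (comp v i))"

definition H1semiv :: "(real^'n) set \<Rightarrow> (real^'n \<Rightarrow> real^'n) \<Rightarrow> real" where
  "H1semiv \<Omega> v = sqrt (\<Sum>i\<in>UNIV. (H1semi \<Omega> (comp v i))^2)"

definition H1normv :: "(real^'n) set \<Rightarrow> (real^'n \<Rightarrow> real^'n) \<Rightarrow> real" where
  "H1normv \<Omega> v = sqrt (\<Sum>i\<in>UNIV. (H1norm \<Omega> (comp v i))^2)"

definition wdiv :: "(real^'n) set \<Rightarrow> (real^'n \<Rightarrow> real^'n) \<Rightarrow> real^'n \<Rightarrow> real" where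
  "wdiv \<Omega> v x = (\<Sum>i\<in>UNIV. wgrad \<Omega> (comp v i) x $ i)"

text \<open>Functions in H^1(Omega) vanishing on Gamma_D: H^1-limits of smooth compactly supported
  functions whose support avoids (the closure of) Gamma_D.\<close>
definition Phi0 :: "(real^'n) set \<Rightarrow> (real^'n) set \<Rightarrow> (real^'n \<Rightarrow> real) set" where
  "Phi0 \<Omega> \<Gamma>D = {\<phi>. H1 \<Omega> \<phi> \<and> (\<exists>s. (\<forall>k. Cinf (s k) \<and> compact (supp (s k)) \<and> supp (s k) \<inter> closure \<Gamma>D = {})
       \<and> (\<lambda>k. H1norm \<Omega> (\<lambda>x. s k x - \<phi> x)) \<longlonglongrightarrow> 0)}"

definition Vsp :: "(real^'n) set \<Rightarrow> (real^'n) set \<Rightarrow> (real^'n \<Rightarrow> real^'n) set" where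
  "Vsp \<Omega> \<Gamma>D = {v. \<forall>i. comp v i \<in> Phi0 \<Omega> \<Gamma>D}"

definition Phi :: "(real^'n) set \<Rightarrow> (real^'n) set \<Rightarrow> real \<Rightarrow> real \<Rightarrow> (real^'n \<Rightarrow> real) set" where
  "Phi \<Omega> \<Gamma>D \<alpha> \<beta> = {\<phi> \<in> Phi0 \<Omega> \<Gamma>D. AE x in lebesgue. x \<in> \<Omega> \<longrightarrow> \<alpha> \<le> \<phi> x \<and> \<phi> x \<le> \<beta>}"

definition kappa :: "real \<Rightarrow> real \<Rightarrow> real \<Rightarrow> real" where
  "kappa k0 k1 s = k0 * sinh (k1 * s)"

definition form_a :: "real \<Rightarrow> (real^'n) set \<Rightarrow> (real^'n \<Rightarrow> real^'n) \<Rightarrow> (real^'n \<Rightarrow> real^'n) \<Rightarrow> real" where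
  "form_a \<mu> \<Omega> u v = \<mu> * intO \<Omega> (\<lambda>x. \<Sum>i\<in>UNIV. wgrad \<Omega> (comp u i) x \<bullet> wgrad \<Omega> (comp v i) x)"

definition form_b :: "(real^'n) set \<Rightarrow> (real^'n \<Rightarrow> real^'n) \<Rightarrow> (real^'n \<Rightarrow> real) \<Rightarrow> real" where
  "form_b \<Omega> v q = - intO \<Omega> (\<lambda>x. wdiv \<Omega> v x * q x)"

definition form_c :: "(real^'n) set \<Rightarrow> (real^'n \<Rightarrow> real^'n) \<Rightarrow> (real^'n \<Rightarrow> real) \<Rightarrow> (real^'n \<Rightarrow> real) \<Rightarrow> real" where
  "form_c \<Omega> v \<psi> \<phi> = intO \<Omega> (\<lambda>x. (v x \<bullet> wgrad \<Omega> \<psi> x) * \<phi> x)"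

definition form_d :: "real \<Rightarrow> (real^'n) set \<Rightarrow> (real^'n \<Rightarrow> real) \<Rightarrow> (real^'n \<Rightarrow> real) \<Rightarrow> real" where
  "form_d \<epsilon> \<Omega> \<psi> \<phi> = \<epsilon> * intO \<Omega> (\<lambda>x. wgrad \<Omega> \<psi> x \<bullet> wgrad \<Omega> \<phi> x)"

definition form_A :: "(real^'n) set \<Rightarrow> (real^'n \<Rightarrow> real^'n) \<Rightarrow> (real^'n \<Rightarrow> real)
    \<Rightarrow> (real^'n \<Rightarrow> real^'n) \<Rightarrow> (real^'n \<Rightarrow> real^'n) \<Rightarrow> real" where
  "form_A \<Omega> E \<psi>h u v = intO \<Omega> (\<lambda>x. (u x \<bullet> wgrad \<Omega> \<psi>h x) * (E x \<bullet> v x))"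

definition form_F :: "(real^'n) set \<Rightarrow> (real \<Rightarrow> real) \<Rightarrow> (real^'n \<Rightarrow> real^'n) \<Rightarrow> (real^'n \<Rightarrow> real)
    \<Rightarrow> (real^'n \<Rightarrow> real^'n) \<Rightarrow> (real^'n \<Rightarrow> real) \<Rightarrow> (real^'n \<Rightarrow> real^'n) \<Rightarrow> real" where
  "form_F \<Omega> \<kappa> f g E \<psi>h v = intO \<Omega> (\<lambda>x. (f x + (g x - \<kappa> (\<psi>h x)) *\<^sub>R E x) \<bullet> v x)"

definition form_G :: "(real^'n) set \<Rightarrow> (real^'n \<Rightarrow> real) \<Rightarrow> (real^'n \<Rightarrow> real) \<Rightarrow> real" where
  "form_G \<Omega> g \<phi> = intO \<Omega> (\<lambda>x. g x * \<phi> x)"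

text \<open>Bounded Lipschitz domain: open, bounded, connected, and near each boundary point the
  domain is the strict epigraph (in some unit direction e) of a Lipschitz function of the
  coordinates orthogonal to e.\<close>
definition lipschitz_domain :: "(real^'n) set \<Rightarrow> bool" where
  "lipschitz_domain \<Omega> \<longleftrightarrow> open \<Omega> \<and> bounded \<Omega> \<and> connected \<Omega> \<and> \<Omega> \<noteq> {} \<and>
     (\<forall>x\<in>frontier \<Omega>. \<exists>r>0. \<exists>e::real^'n. \<exists>L. \<exists>h::real^'n \<Rightarrow> real.
        norm e = 1 \<and> L-lipschitz_on UNIV h \<and> (\<forall>y. h y = h (y - (y \<bullet> e) *\<^sub>R e)) \<and>
        \<Omega> \<inter> ball x r = {y \<in> ball x r. y \<bullet> e > h y})"

text \<open>Positive (n-1)-dimensional Hausdorff (surface) measure: the Hausdorff content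
  is positive, i.e. every countable cover by bounded sets has
  sum of diam^(n-1) bounded below by a fixed positive constant.\<close>
definition pos_surface_measure :: "(real^'n) set \<Rightarrow> bool" where
  "pos_surface_measure S \<longleftrightarrow> (\<exists>c>0. \<forall>C::nat \<Rightarrow> (real^'n) set.
     (\<forall>k. bounded (C k)) \<and> S \<subseteq> (\<Union>k. C k) \<longrightarrow>
       ennreal c \<le> (\<Sum>k. ennreal (diameter (C k) ^ (CARD('n) - 1))))"

end

theory Submission
  imports Defs
begin


lemma G_abs:
  fixes h :: "'a \<Rightarrow> real"
  shows "\<bar>integral\<^sup>L M h\<bar> \<le> enn2real (\<integral>\<^sup>+x. ennreal \<bar>h x\<bar> \<partial>M)"
proof (cases "integrable M h")
  case True
  have "\<bar>integral\<^sup>L M h\<bar> \<le> integral\<^sup>L M (\<lambda>x. \<bar>h x\<bar>)"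
    by (rule integral_abs_bound)
  also have "\<dots> = enn2real (\<integral>\<^sup>+x. ennreal \<bar>h x\<bar> \<partial>M)"
    using True by (intro integral_eq_nn_integral) auto
  finally show ?thesis .
next
  case False
  then show ?thesis by (simp add: not_integrable_integral_eq)
qed

lemma G_eq:
  fixes h :: "'a \<Rightarrow> real"
  assumes "h \<in> borel_measurable M" "\<And>x. h x \<ge> 0"
  shows "integral\<^sup>L M h = enn2real (\<integral>\<^sup>+x. ennreal (h x) \<partial>M)"
  using assms by (intro integral_eq_nn_integral) auto

lemma G_CS:
  fixes f g :: "'a \<Rightarrow> real"
  assumes [measurable]: "f \<in> borel_measurable M" "g \<in> borel_measurable M"
    and "\<And>x. f x \<ge> 0" "\<And>x. g x \<ge> 0"
  shows "(\<integral>\<^sup>+x. ennreal (f x * g x) \<partial>M)\<^sup>2 \<le> (\<integral>\<^sup>+x. ennreal ((f x)\<^sup>2) \<partial>M) * (\<integral>\<^sup>+x. ennreal ((g x)\<^sup>2) \<partial>M)"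
proof -
  have "(\<integral>\<^sup>+x. ennreal (f x) * ennreal (g x) \<partial>M)\<^sup>2 \<le> (\<integral>\<^sup>+x. ennreal (f x) ^ 2 \<partial>M) * (\<integral>\<^sup>+x. ennreal (g x) ^ 2 \<partial>M)"
    by (rule Cauchy_Schwarz_nn_integral) auto
  then show ?thesis using assms(3,4) by (simp add: ennreal_mult ennreal_power)
qed

lemma G_root:
  assumes "X ^ k \<le> ennreal (B ^ k)" "0 \<le> B" "k > 0"
  shows "X \<le> ennreal B"
proof (cases X)
  case (real x)
  then have "ennreal (x ^ k) \<le> ennreal (B ^ k)" using assms by (simp add: ennreal_power)
  then have "x ^ k \<le> B ^ k" using assms by (simp add: ennreal_le_iff)
  then have "x \<le> B" using assms real by (metis Suc_pred power_le_imp_le_base)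
  then show ?thesis using real by simp
next
  case top
  then have "top \<le> ennreal (B ^ k)" using assms by simp
  then show ?thesis by (simp add: top_unique)
qed

lemma G_T:
  fixes a b c :: "'a \<Rightarrow> real"
  assumes [measurable]: "a \<in> borel_measurable M" "b \<in> borel_measurable M" "c \<in> borel_measurable M"
    and "\<And>x. a x \<ge> 0" "\<And>x. b x \<ge> 0" "\<And>x. c x \<ge> 0"
  shows "(\<integral>\<^sup>+x. ennreal (a x * b x * c x) \<partial>M) ^ 4 \<le>
    (\<integral>\<^sup>+x. ennreal (a x ^ 4) \<partial>M) * (\<integral>\<^sup>+x. ennreal (c x ^ 4) \<partial>M) * ((\<integral>\<^sup>+x. ennreal ((b x)\<^sup>2) \<partial>M))\<^sup>2"
proof -
  have 1: "(\<integral>\<^sup>+x. ennreal ((a x * c x) * b x) \<partial>M)\<^sup>2 \<le> (\<integral>\<^sup>+x. ennreal ((a x * c x)\<^sup>2) \<partial>M) * (\<integral>\<^sup>+x. ennreal ((b x)\<^sup>2) \<partial>M)"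
    using assms by (intro G_CS) auto
  have 2: "(\<integral>\<^sup>+x. ennreal ((a x)\<^sup>2 * (c x)\<^sup>2) \<partial>M)\<^sup>2 \<le> (\<integral>\<^sup>+x. ennreal (((a x)\<^sup>2)\<^sup>2) \<partial>M) * (\<integral>\<^sup>+x. ennreal (((c x)\<^sup>2)\<^sup>2) \<partial>M)"
    using assms by (intro G_CS) auto
  have e1: "(\<lambda>x. a x * b x * c x) = (\<lambda>x. (a x * c x) * b x)" by (auto simp: algebra_simps)
  have e2: "(\<lambda>x. (a x * c x)\<^sup>2) = (\<lambda>x. (a x)\<^sup>2 * (c x)\<^sup>2)" by (auto simp: algebra_simps power2_eq_square)
  have e3: "\<And>y::real. (y\<^sup>2)\<^sup>2 = y ^ 4" by simp
  define X where "X = (\<integral>\<^sup>+x. ennreal (a x * b x * c x) \<partial>M)"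
  define Y where "Y = (\<integral>\<^sup>+x. ennreal ((a x)\<^sup>2 * (c x)\<^sup>2) \<partial>M)"
  define B where "B = (\<integral>\<^sup>+x. ennreal ((b x)\<^sup>2) \<partial>M)"
  have "X = (\<integral>\<^sup>+x. ennreal ((a x * c x) * b x) \<partial>M)" unfolding X_def by (simp add: mult_ac)
  moreover have "Y = (\<integral>\<^sup>+x. ennreal ((a x * c x)\<^sup>2) \<partial>M)" unfolding Y_def by (simp add: power_mult_distrib)
  ultimately have h1: "X\<^sup>2 \<le> Y * B" using 1 unfolding B_def by simp
  have h2: "Y\<^sup>2 \<le> (\<integral>\<^sup>+x. ennreal (a x ^ 4) \<partial>M) * (\<integral>\<^sup>+x. ennreal (c x ^ 4) \<partial>M)"
    using 2 unfolding Y_def e3 .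
  have "X ^ 4 = (X\<^sup>2)\<^sup>2" by simp
  also have "\<dots> \<le> (Y * B)\<^sup>2" using h1 by (intro power_mono) auto
  also have "\<dots> = Y\<^sup>2 * B\<^sup>2" by (simp add: power_mult_distrib)
  also have "\<dots> \<le> (\<integral>\<^sup>+x. ennreal (a x ^ 4) \<partial>M) * (\<integral>\<^sup>+x. ennreal (c x ^ 4) \<partial>M) * B\<^sup>2"
    using h2 by (intro mult_right_mono) auto
  finally show ?thesis unfolding X_def B_def .
qed

lemma G_T':
  fixes a b c :: "'a \<Rightarrow> real"
  assumes "a \<in> borel_measurable M" "b \<in> borel_measurable M" "c \<in> borel_measurable M"
    and "\<And>x. a x \<ge> 0" "\<And>x. b x \<ge> 0" "\<And>x. c x \<ge> 0"
    and "(\<integral>\<^sup>+x. ennreal (a x ^ 4) \<partial>M) \<le> ennreal (A ^ 4)"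
    and "(\<integral>\<^sup>+x. ennreal (c x ^ 4) \<partial>M) \<le> ennreal (C ^ 4)"
    and "(\<integral>\<^sup>+x. ennreal ((b x)\<^sup>2) \<partial>M) \<le> ennreal (B\<^sup>2)"
    and "A \<ge> 0" "B \<ge> 0" "C \<ge> 0"
  shows "(\<integral>\<^sup>+x. ennreal (a x * b x * c x) \<partial>M) \<le> ennreal (A * B * C)"
proof (rule G_root[where k=4])
  have "(\<integral>\<^sup>+x. ennreal (a x * b x * c x) \<partial>M) ^ 4 \<le>
    (\<integral>\<^sup>+x. ennreal (a x ^ 4) \<partial>M) * (\<integral>\<^sup>+x. ennreal (c x ^ 4) \<partial>M) * ((\<integral>\<^sup>+x. ennreal ((b x)\<^sup>2) \<partial>M))\<^sup>2"
    using assms by (intro G_T) auto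
  also have "\<dots> \<le> ennreal (A ^ 4) * ennreal (C ^ 4) * (ennreal (B\<^sup>2))\<^sup>2"
    using assms by (intro mult_mono power_mono) auto
  also have "\<dots> = ennreal ((A * B * C) ^ 4)"
    using assms by (simp add: power_mult_distrib ennreal_mult ennreal_power mult_ac)
  finally show "(\<integral>\<^sup>+x. ennreal (a x * b x * c x) \<partial>M) ^ 4 \<le> ennreal ((A * B * C) ^ 4)" .
qed (use assms in auto)

lemma G_CS':
  fixes a b :: "'a \<Rightarrow> real"
  assumes "a \<in> borel_measurable M" "b \<in> borel_measurable M"
    and "\<And>x. a x \<ge> 0" "\<And>x. b x \<ge> 0"
    and "(\<integral>\<^sup>+x. ennreal ((a x)\<^sup>2) \<partial>M) \<le> ennreal (A\<^sup>2)"
    and "(\<integral>\<^sup>+x. ennreal ((b x)\<^sup>2) \<partial>M) \<le> ennreal (B\<^sup>2)"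
    and "A \<ge> 0" "B \<ge> 0"
  shows "(\<integral>\<^sup>+x. ennreal (a x * b x) \<partial>M) \<le> ennreal (A * B)"
proof (rule G_root[where k=2])
  have "(\<integral>\<^sup>+x. ennreal (a x * b x) \<partial>M) ^ 2 \<le>
    (\<integral>\<^sup>+x. ennreal ((a x)\<^sup>2) \<partial>M) * (\<integral>\<^sup>+x. ennreal ((b x)\<^sup>2) \<partial>M)"
    using assms by (intro G_CS) auto
  also have "\<dots> \<le> ennreal (A\<^sup>2) * ennreal (B\<^sup>2)"
    using assms by (intro mult_mono) auto
  also have "\<dots> = ennreal ((A * B)\<^sup>2)"
    using assms by (simp add: ennreal_mult[symmetric] power_mult_distrib)
  finally show "(\<integral>\<^sup>+x. ennreal (a x * b x) \<partial>M) ^ 2 \<le> ennreal ((A * B)\<^sup>2)" .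
qed (use assms in auto)



lemma vec_meas:
  fixes F :: "'a \<Rightarrow> real^'n"
  assumes "\<And>i. (\<lambda>x. F x $ i) \<in> borel_measurable M"
  shows "F \<in> borel_measurable M"
proof -
  have "\<forall>b\<in>Basis. (\<lambda>x. F x \<bullet> b) \<in> borel_measurable M"
  proof
    fix b :: "real^'n" assume "b \<in> Basis"
    then obtain i where "b = axis i 1" unfolding Basis_vec_def Basis_real_def by blast
    then show "(\<lambda>x. F x \<bullet> b) \<in> borel_measurable M" using assms[of i] by (simp add: inner_axis)
  qed
  then show ?thesis by (rule borel_measurable_euclidean_space[THEN iffD2])
qed

lemma norm_sq_vec: "(norm (x::real^'n))\<^sup>2 = (\<Sum>i\<in>UNIV. (x $ i)\<^sup>2)"
  by (simp add: norm_vec_def L2_set_def sum_nonneg)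

lemma open_sets_leb: "open \<Omega> \<Longrightarrow> \<Omega> \<in> sets lebesgue"
  by (simp add: borel_open)

lemma T_int: "\<Omega> \<in> sets lebesgue \<Longrightarrow> intO \<Omega> f = integral\<^sup>L (lebesgue_on \<Omega>) f"
  unfolding intO_def set_lebesgue_integral_def by (simp add: integral_restrict_space)

lemma T_meas: fixes f :: "real^'n \<Rightarrow> real" shows "\<Omega> \<in> sets lebesgue \<Longrightarrow> set_borel_measurable lebesgue \<Omega> f \<longleftrightarrow> f \<in> borel_measurable (lebesgue_on \<Omega>)"
proof -
  assume a: "\<Omega> \<in> sets lebesgue"
  then have "\<Omega> \<inter> space lebesgue \<in> sets lebesgue" by simp
  from borel_measurable_restrict_space_iff[OF this, of f] show ?thesis
    unfolding set_borel_measurable_def by simp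
qed

lemma T_L2: "\<Omega> \<in> sets lebesgue \<Longrightarrow> L2 \<Omega> f \<longleftrightarrow> f \<in> borel_measurable (lebesgue_on \<Omega>) \<and> integrable (lebesgue_on \<Omega>) (\<lambda>x. (f x)\<^sup>2)"
  unfolding L2_def set_integrable_def by (simp add: T_meas integrable_restrict_space)

lemma T_nn: "\<Omega> \<in> sets lebesgue \<Longrightarrow> (\<integral>\<^sup>+x. indicator \<Omega> x * h x \<partial>lebesgue) = (\<integral>\<^sup>+x. h x \<partial>lebesgue_on \<Omega>)"
  by (simp add: nn_integral_restrict_space mult.commute)

lemma T_AE: "\<Omega> \<in> sets lebesgue \<Longrightarrow> (AE x in lebesgue. x \<in> \<Omega> \<longrightarrow> P x) \<Longrightarrow> (AE x in lebesgue_on \<Omega>. P x)"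
  by (simp add: AE_restrict_space_iff)

lemma nn_sq_eq:
  assumes "integrable M (\<lambda>x. (f x)\<^sup>2)"
  shows "(\<integral>\<^sup>+x. ennreal ((f x)\<^sup>2) \<partial>M) = ennreal ((sqrt (integral\<^sup>L M (\<lambda>x. (f x)\<^sup>2)))\<^sup>2)"
proof -
  have "integral\<^sup>L M (\<lambda>x. (f x)\<^sup>2) \<ge> 0" by (intro integral_nonneg_AE) auto
  then show ?thesis using assms by (simp add: nn_integral_eq_integral)
qed

lemma H1_N:
  assumes "\<Omega> \<in> sets lebesgue" "H1 \<Omega> u"
  shows "u \<in> borel_measurable (lebesgue_on \<Omega>)" "integrable (lebesgue_on \<Omega>) (\<lambda>x. (u x)\<^sup>2)"
    "\<And>i. (\<lambda>x. wgrad \<Omega> u x $ i) \<in> borel_measurable (lebesgue_on \<Omega>)"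
    "\<And>i. integrable (lebesgue_on \<Omega>) (\<lambda>x. (wgrad \<Omega> u x $ i)\<^sup>2)"
proof -
  from assms(2) have L: "L2 \<Omega> u" and ex: "\<exists>G. weak_grad \<Omega> u G" unfolding H1_def by auto
  from ex have "weak_grad \<Omega> u (wgrad \<Omega> u)" unfolding wgrad_def by (rule someI_ex)
  then have Li: "\<And>i. L2 \<Omega> (\<lambda>x. wgrad \<Omega> u x $ i)" unfolding weak_grad_def by blast
  show "(\<lambda>x. wgrad \<Omega> u x $ i) \<in> borel_measurable (lebesgue_on \<Omega>)"
    "integrable (lebesgue_on \<Omega>) (\<lambda>x. (wgrad \<Omega> u x $ i)\<^sup>2)" for i
    using Li[of i] T_L2[OF assms(1), of "\<lambda>x. wgrad \<Omega> u x $ i"] by simp_all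
  show "u \<in> borel_measurable (lebesgue_on \<Omega>)" "integrable (lebesgue_on \<Omega>) (\<lambda>x. (u x)\<^sup>2)"
    using L T_L2[OF assms(1), of u] by simp_all
qed

lemma vecL2:
  fixes F :: "'a \<Rightarrow> real^'n"
  assumes "\<And>i. (\<lambda>x. F x $ i) \<in> borel_measurable M" "\<And>i. integrable M (\<lambda>x. (F x $ i)\<^sup>2)"
  shows "F \<in> borel_measurable M" "integrable M (\<lambda>x. (norm (F x))\<^sup>2)"
    "integral\<^sup>L M (\<lambda>x. (norm (F x))\<^sup>2) = (\<Sum>i\<in>UNIV. integral\<^sup>L M (\<lambda>x. (F x $ i)\<^sup>2))"
proof -
  show "F \<in> borel_measurable M" by (rule vec_meas[OF assms(1)])
  have e: "(\<lambda>x. (norm (F x))\<^sup>2) = (\<lambda>x. \<Sum>i\<in>UNIV. (F x $ i)\<^sup>2)" by (simp add: norm_sq_vec)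
  show "integrable M (\<lambda>x. (norm (F x))\<^sup>2)" unfolding e by (rule Bochner_Integration.integrable_sum) (rule assms(2))
  show "integral\<^sup>L M (\<lambda>x. (norm (F x))\<^sup>2) = (\<Sum>i\<in>UNIV. integral\<^sup>L M (\<lambda>x. (F x $ i)\<^sup>2))"
    unfolding e by (rule Bochner_Integration.integral_sum) (rule assms(2))
qed

lemma H1_nn:
  assumes "\<Omega> \<in> sets lebesgue" "H1 \<Omega> u"
  shows "(\<integral>\<^sup>+x. ennreal ((u x)\<^sup>2) \<partial>lebesgue_on \<Omega>) = ennreal ((L2norm \<Omega> u)\<^sup>2)"
    "(\<integral>\<^sup>+x. ennreal ((norm (wgrad \<Omega> u x))\<^sup>2) \<partial>lebesgue_on \<Omega>) = ennreal ((H1semi \<Omega> u)\<^sup>2)"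
    "wgrad \<Omega> u \<in> borel_measurable (lebesgue_on \<Omega>)"
    "integrable (lebesgue_on \<Omega>) (\<lambda>x. (norm (wgrad \<Omega> u x))\<^sup>2)"
    "(H1semi \<Omega> u)\<^sup>2 = integral\<^sup>L (lebesgue_on \<Omega>) (\<lambda>x. (norm (wgrad \<Omega> u x))\<^sup>2)"
proof -
  note H = H1_N[OF assms]
  show "(\<integral>\<^sup>+x. ennreal ((u x)\<^sup>2) \<partial>lebesgue_on \<Omega>) = ennreal ((L2norm \<Omega> u)\<^sup>2)"
    unfolding L2norm_def T_int[OF assms(1)] using H(2) by (rule nn_sq_eq)
  note V = vecL2[of "wgrad \<Omega> u", OF H(3,4)]
  show "(\<integral>\<^sup>+x. ennreal ((norm (wgrad \<Omega> u x))\<^sup>2) \<partial>lebesgue_on \<Omega>) = ennreal ((H1semi \<Omega> u)\<^sup>2)"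
    unfolding H1semi_def T_int[OF assms(1)] using V(2) by (rule nn_sq_eq)
  show "wgrad \<Omega> u \<in> borel_measurable (lebesgue_on \<Omega>)" by (rule V(1))
  show "integrable (lebesgue_on \<Omega>) (\<lambda>x. (norm (wgrad \<Omega> u x))\<^sup>2)" by (rule V(2))
  have "integral\<^sup>L (lebesgue_on \<Omega>) (\<lambda>x. (norm (wgrad \<Omega> u x))\<^sup>2) \<ge> 0" by (intro integral_nonneg_AE) auto
  then show "(H1semi \<Omega> u)\<^sup>2 = integral\<^sup>L (lebesgue_on \<Omega>) (\<lambda>x. (norm (wgrad \<Omega> u x))\<^sup>2)"
    unfolding H1semi_def T_int[OF assms(1)] by simp
qed

lemma H1norm_ge:
  "L2norm \<Omega> u \<le> H1norm \<Omega> u" "H1semi \<Omega> u \<le> H1norm \<Omega> u" "0 \<le> H1norm \<Omega> u"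
  "(H1norm \<Omega> u)\<^sup>2 = (L2norm \<Omega> u)\<^sup>2 + (H1semi \<Omega> u)\<^sup>2"
  unfolding H1norm_def
  apply (rule order_trans[OF abs_ge_self real_sqrt_ge_abs1])
  apply (rule order_trans[OF abs_ge_self real_sqrt_ge_abs2])
  apply simp
  apply simp
  done



lemma sob_N:
  assumes Om: "\<Omega> \<in> sets lebesgue"
    and sobolev: "\<forall>\<phi>. H1 \<Omega> \<phi> \<longrightarrow>
        (\<integral>\<^sup>+x. indicator \<Omega> x * ennreal ((\<phi> x)^4) \<partial>lebesgue) \<le> ennreal ((Csob * H1norm \<Omega> \<phi>)^4)"
    and "H1 \<Omega> \<phi>"
  shows "(\<integral>\<^sup>+x. ennreal ((\<phi> x)^4) \<partial>lebesgue_on \<Omega>) \<le> ennreal ((Csob * H1norm \<Omega> \<phi>)^4)"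
proof -
  have "(\<integral>\<^sup>+x. indicator \<Omega> x * ennreal ((\<phi> x)^4) \<partial>lebesgue) \<le> ennreal ((Csob * H1norm \<Omega> \<phi>)^4)"
    using sobolev assms(3) by blast
  then show ?thesis unfolding T_nn[OF Om] .
qed

lemma enn_bound:
  assumes "\<bar>r\<bar> \<le> enn2real X" "X \<le> ennreal R" "0 \<le> R"
  shows "\<bar>r\<bar> \<le> R"
proof -
  have "enn2real X \<le> enn2real (ennreal R)" using assms by (intro enn2real_mono) auto
  then show ?thesis using assms by simp
qed

lemma comp_H1:
  assumes "u \<in> Vsp \<Omega> \<Gamma>D"
  shows "H1 \<Omega> (\<lambda>x. u x $ i)"
  using assms unfolding Vsp_def Phi0_def comp_def by auto

lemma vec_meas_H1:
  assumes Om: "\<Omega> \<in> sets lebesgue" and "\<And>i. H1 \<Omega> (\<lambda>x. u x $ i)"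
  shows "u \<in> borel_measurable (lebesgue_on \<Omega>)"
  by (rule vec_meas) (rule H1_N(1)[OF Om assms(2)])

lemma H1normv_sq: "(H1normv \<Omega> u)\<^sup>2 = (\<Sum>i\<in>UNIV. (H1norm \<Omega> (\<lambda>x. u x $ i))\<^sup>2)"
  unfolding H1normv_def comp_def by (simp add: sum_nonneg)

lemma H1semiv_sq: "(H1semiv \<Omega> u)\<^sup>2 = (\<Sum>i\<in>UNIV. (H1semi \<Omega> (\<lambda>x. u x $ i))\<^sup>2)"
  unfolding H1semiv_def comp_def by (simp add: sum_nonneg)

lemma vecL4:
  fixes u :: "real^'n \<Rightarrow> real^'n"
  assumes Om: "\<Omega> \<in> sets lebesgue"
    and sobolev: "\<forall>\<phi>. H1 \<Omega> \<phi> \<longrightarrow>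
        (\<integral>\<^sup>+x. indicator \<Omega> x * ennreal ((\<phi> x)^4) \<partial>lebesgue) \<le> ennreal ((Csob * H1norm \<Omega> \<phi>)^4)"
    and H: "\<And>i. H1 \<Omega> (\<lambda>x. u x $ i)" and Cs: "Csob > 0"
  shows "(\<integral>\<^sup>+x. ennreal ((norm (u x))^4) \<partial>lebesgue_on \<Omega>) \<le> ennreal ((Csob * H1normv \<Omega> u)^4)"
proof -
  define n where "n i = H1norm \<Omega> (\<lambda>x. u x $ i)" for i
  have n0: "0 \<le> n i" for i unfolding n_def by (rule H1norm_ge(3))
  have meas: "(\<lambda>x. u x $ i) \<in> borel_measurable (lebesgue_on \<Omega>)" for i by (rule H1_N(1)[OF Om H])
  have e: "(norm (u x))^4 = (\<Sum>i\<in>UNIV. \<Sum>j\<in>UNIV. (u x $ i)\<^sup>2 * (u x $ j)\<^sup>2)" for x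
  proof -
    have "(norm (u x))^4 = ((norm (u x))\<^sup>2)\<^sup>2" by simp
    also have "\<dots> = (\<Sum>i\<in>UNIV. (u x $ i)\<^sup>2) * (\<Sum>j\<in>UNIV. (u x $ j)\<^sup>2)" by (subst norm_sq_vec) (rule power2_eq_square)
    also have "\<dots> = (\<Sum>i\<in>UNIV. \<Sum>j\<in>UNIV. (u x $ i)\<^sup>2 * (u x $ j)\<^sup>2)" by (rule sum_product)
    finally show ?thesis .
  qed
  have "(\<integral>\<^sup>+x. ennreal ((norm (u x))^4) \<partial>lebesgue_on \<Omega>) =
      (\<integral>\<^sup>+x. (\<Sum>i\<in>UNIV. \<Sum>j\<in>UNIV. ennreal ((u x $ i)\<^sup>2 * (u x $ j)\<^sup>2)) \<partial>lebesgue_on \<Omega>)"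
    unfolding e by (simp add: sum_nonneg)
  also have "\<dots> = (\<Sum>i\<in>UNIV. (\<integral>\<^sup>+x. (\<Sum>j\<in>UNIV. ennreal ((u x $ i)\<^sup>2 * (u x $ j)\<^sup>2)) \<partial>lebesgue_on \<Omega>))"
    by (rule nn_integral_sum) (use meas in simp)
  also have "\<dots> = (\<Sum>i\<in>UNIV. \<Sum>j\<in>UNIV. (\<integral>\<^sup>+x. ennreal ((u x $ i)\<^sup>2 * (u x $ j)\<^sup>2) \<partial>lebesgue_on \<Omega>))"
    by (intro sum.cong refl nn_integral_sum) (use meas in simp)
  also have "\<dots> \<le> (\<Sum>i\<in>UNIV. \<Sum>j\<in>UNIV. ennreal ((Csob * n i)\<^sup>2 * (Csob * n j)\<^sup>2))"
  proof (intro sum_mono)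
    fix i j
    have s: "(\<integral>\<^sup>+x. ennreal (((u x $ k)\<^sup>2)\<^sup>2) \<partial>lebesgue_on \<Omega>) \<le> ennreal (((Csob * n k)\<^sup>2)\<^sup>2)" for k
      using sob_N[OF Om sobolev H[of k]] unfolding n_def by simp
    show "(\<integral>\<^sup>+x. ennreal ((u x $ i)\<^sup>2 * (u x $ j)\<^sup>2) \<partial>lebesgue_on \<Omega>) \<le> ennreal ((Csob * n i)\<^sup>2 * (Csob * n j)\<^sup>2)"
      by (rule G_CS'[OF _ _ _ _ s s]) (use meas in auto)
  qed
  also have "\<dots> = ennreal (\<Sum>i\<in>UNIV. \<Sum>j\<in>UNIV. (Csob * n i)\<^sup>2 * (Csob * n j)\<^sup>2)"
    by (simp add: sum_nonneg)
  also have "(\<Sum>i\<in>UNIV. \<Sum>j\<in>UNIV. (Csob * n i)\<^sup>2 * (Csob * n j)\<^sup>2) = (\<Sum>i\<in>UNIV. (Csob * n i)\<^sup>2) * (\<Sum>j\<in>UNIV. (Csob * n j)\<^sup>2)"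
    by (rule sum_product[symmetric])
  also have "(\<Sum>i\<in>UNIV. (Csob * n i)\<^sup>2) = Csob\<^sup>2 * (H1normv \<Omega> u)\<^sup>2"
    unfolding H1normv_sq n_def by (simp add: power_mult_distrib sum_distrib_left)
  also have "Csob\<^sup>2 * (H1normv \<Omega> u)\<^sup>2 * (Csob\<^sup>2 * (H1normv \<Omega> u)\<^sup>2) = (Csob * H1normv \<Omega> u)^4"
    by (simp add: power_mult_distrib field_simps)
  finally show ?thesis .
qed

lemma vecL2_H1:
  fixes u :: "real^'n \<Rightarrow> real^'n"
  assumes Om: "\<Omega> \<in> sets lebesgue" and H: "\<And>i. H1 \<Omega> (\<lambda>x. u x $ i)"
  shows "(\<integral>\<^sup>+x. ennreal ((norm (u x))\<^sup>2) \<partial>lebesgue_on \<Omega>) \<le> ennreal ((H1normv \<Omega> u)\<^sup>2)"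
proof -
  have meas: "(\<lambda>x. u x $ i) \<in> borel_measurable (lebesgue_on \<Omega>)" for i by (rule H1_N(1)[OF Om H])
  have "(\<integral>\<^sup>+x. ennreal ((norm (u x))\<^sup>2) \<partial>lebesgue_on \<Omega>) =
      (\<integral>\<^sup>+x. (\<Sum>i\<in>UNIV. ennreal ((u x $ i)\<^sup>2)) \<partial>lebesgue_on \<Omega>)"
    unfolding norm_sq_vec by (simp add: sum_nonneg)
  also have "\<dots> = (\<Sum>i\<in>UNIV. (\<integral>\<^sup>+x. ennreal ((u x $ i)\<^sup>2) \<partial>lebesgue_on \<Omega>))"
    by (rule nn_integral_sum) (use meas in simp)
  also have "\<dots> = (\<Sum>i\<in>UNIV. ennreal ((L2norm \<Omega> (\<lambda>x. u x $ i))\<^sup>2))"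
    using H1_nn(1)[OF Om H] by simp
  also have "\<dots> \<le> (\<Sum>i\<in>UNIV. ennreal ((H1norm \<Omega> (\<lambda>x. u x $ i))\<^sup>2))"
  proof (intro sum_mono ennreal_leI)
    fix i
    show "(L2norm \<Omega> (\<lambda>x. u x $ i))\<^sup>2 \<le> (H1norm \<Omega> (\<lambda>x. u x $ i))\<^sup>2"
      using H1norm_ge(4)[of \<Omega> "\<lambda>x. u x $ i"] by simp
  qed
  also have "\<dots> = ennreal ((H1normv \<Omega> u)\<^sup>2)" unfolding H1normv_sq by simp
  finally show ?thesis .
qed

lemma form_a_self:
  fixes u :: "real^'n \<Rightarrow> real^'n"
  assumes Om: "\<Omega> \<in> sets lebesgue" and H: "\<And>i. H1 \<Omega> (\<lambda>x. u x $ i)"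
  shows "form_a \<mu> \<Omega> u u = \<mu> * (H1semiv \<Omega> u)\<^sup>2"
proof -
  have "intO \<Omega> (\<lambda>x. \<Sum>i\<in>UNIV. wgrad \<Omega> (comp u i) x \<bullet> wgrad \<Omega> (comp u i) x)
     = integral\<^sup>L (lebesgue_on \<Omega>) (\<lambda>x. \<Sum>i\<in>UNIV. (norm (wgrad \<Omega> (\<lambda>x. u x $ i) x))\<^sup>2)"
    unfolding T_int[OF Om] comp_def by (simp add: power2_norm_eq_inner)
  also have "\<dots> = (\<Sum>i\<in>UNIV. integral\<^sup>L (lebesgue_on \<Omega>) (\<lambda>x. (norm (wgrad \<Omega> (\<lambda>x. u x $ i) x))\<^sup>2))"
    by (rule Bochner_Integration.integral_sum) (rule H1_nn(4)[OF Om H])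
  also have "\<dots> = (H1semiv \<Omega> u)\<^sup>2"
    unfolding H1semiv_sq using H1_nn(5)[OF Om H] by simp
  finally show ?thesis unfolding form_a_def by simp
qed

lemma vecL2_L2:
  fixes f :: "real^'n \<Rightarrow> real^'n"
  assumes Om: "\<Omega> \<in> sets lebesgue" and fL: "\<forall>i. L2 \<Omega> (comp f i)"
  shows "(\<integral>\<^sup>+x. ennreal ((norm (f x))\<^sup>2) \<partial>lebesgue_on \<Omega>) = ennreal ((L2normv \<Omega> f)\<^sup>2)"
    "f \<in> borel_measurable (lebesgue_on \<Omega>)"
proof -
  have c: "(\<lambda>x. f x $ i) \<in> borel_measurable (lebesgue_on \<Omega>)" "integrable (lebesgue_on \<Omega>) (\<lambda>x. (f x $ i)\<^sup>2)" for i
    using fL T_L2[OF Om, of "\<lambda>x. f x $ i"] unfolding comp_def by auto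
  note V = vecL2[of "f", OF c]
  show "(\<integral>\<^sup>+x. ennreal ((norm (f x))\<^sup>2) \<partial>lebesgue_on \<Omega>) = ennreal ((L2normv \<Omega> f)\<^sup>2)"
    unfolding L2normv_def T_int[OF Om] using V(2) by (rule nn_sq_eq)
  show "f \<in> borel_measurable (lebesgue_on \<Omega>)" by (rule V(1))
qed

lemma L2_nn:
  assumes Om: "\<Omega> \<in> sets lebesgue" and "L2 \<Omega> g"
  shows "(\<integral>\<^sup>+x. ennreal ((g x)\<^sup>2) \<partial>lebesgue_on \<Omega>) = ennreal ((L2norm \<Omega> g)\<^sup>2)"
    "g \<in> borel_measurable (lebesgue_on \<Omega>)"
  using assms T_L2[OF Om, of g] nn_sq_eq[of "lebesgue_on \<Omega>" g] unfolding L2norm_def T_int[OF Om] by auto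



lemma kappa_nonneg:
  assumes "k0 > 0" "k1 > 0"
  shows "0 \<le> kappa k0 k1 s * s"
proof (cases "s \<ge> 0")
  case True
  then have "sinh (k1 * s) \<ge> 0" using assms by simp
  then show ?thesis using True assms unfolding kappa_def by simp
next
  case False
  then have "k1 * s \<le> 0" using assms by (simp add: mult_nonneg_nonpos)
  then have "sinh (k1 * s) \<le> 0" by simp
  then have "k0 * sinh (k1 * s) \<le> 0" using assms by (simp add: mult_nonneg_nonpos)
  then show ?thesis using False unfolding kappa_def by (simp add: mult_nonpos_nonpos)
qed

lemma arith_key:
  fixes c S U R Cp :: real
  assumes "c * S\<^sup>2 \<le> R * (Cp * S) + c / 2 * S\<^sup>2" "c > 0" "0 \<le> S" "U \<le> Cp * S" "Cp > 0" "0 \<le> R"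
  shows "U \<le> 2 * Cp\<^sup>2 / c * R"
proof (cases "S = 0")
  case True
  then have "U \<le> 0" using assms by simp
  also have "0 \<le> 2 * Cp\<^sup>2 / c * R" using assms by simp
  finally show ?thesis .
next
  case False
  then have Sp: "S > 0" using assms by simp
  have "(c / 2 * S) * S \<le> (R * Cp) * S" using assms(1) by (simp add: power2_eq_square algebra_simps)
  then have "c / 2 * S \<le> R * Cp" using Sp by (simp add: mult_le_cancel_right)
  then have "S \<le> 2 * R * Cp / c" using assms(2) by (simp add: field_simps)
  then have "Cp * S \<le> Cp * (2 * R * Cp / c)" using assms(5) by (intro mult_left_mono) auto
  also have "\<dots> = 2 * Cp\<^sup>2 / c * R" by (simp add: power2_eq_square field_simps)
  finally show ?thesis using assms(4) by simp
qed

lemma part1: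
  fixes uh :: "real^'n \<Rightarrow> real^'n" and \<psi> g :: "real^'n \<Rightarrow> real"
  assumes Om: "\<Omega> \<in> sets lebesgue" and eps: "\<epsilon> > 0" and Cs: "Csob > 0" and Cp: "Cp > 0"
    and k0: "k0 > 0" and k1: "k1 > 0" and g_L2: "L2 \<Omega> g"
    and sobolev: "\<forall>\<phi>. H1 \<Omega> \<phi> \<longrightarrow>
        (\<integral>\<^sup>+x. indicator \<Omega> x * ennreal ((\<phi> x)^4) \<partial>lebesgue) \<le> ennreal ((Csob * H1norm \<Omega> \<phi>)^4)"
    and poincare: "\<forall>\<phi>\<in>Phi0 \<Omega> \<Gamma>D. H1norm \<Omega> \<phi> \<le> Cp * H1semi \<Omega> \<phi>"
    and uh: "uh \<in> Vsp \<Omega> \<Gamma>D" and small: "2 * Cp^2 * Csob^2 * H1normv \<Omega> uh \<le> \<epsilon>"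
    and psi: "\<psi> \<in> Phi \<Omega> \<Gamma>D \<alpha> \<beta>"
    and eq: "\<forall>\<phi>\<in>Phi0 \<Omega> \<Gamma>D. intO \<Omega> (\<lambda>x. kappa k0 k1 (\<psi> x) * \<phi> x) + form_c \<Omega> uh \<psi> \<phi>
              + form_d \<epsilon> \<Omega> \<psi> \<phi> = form_G \<Omega> g \<phi>"
  shows "H1norm \<Omega> \<psi> \<le> 2 * Cp^2 / \<epsilon> * L2norm \<Omega> g"
proof -
  have psi0: "\<psi> \<in> Phi0 \<Omega> \<Gamma>D" using psi unfolding Phi_def by simp
  then have Hp: "H1 \<Omega> \<psi>" unfolding Phi0_def by simp
  have Hu: "\<And>i. H1 \<Omega> (\<lambda>x. uh x $ i)" using uh by (rule comp_H1)
  define s where "s = H1semi \<Omega> \<psi>"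
  define n where "n = H1norm \<Omega> \<psi>"
  define l where "l = L2norm \<Omega> \<psi>"
  define U where "U = H1normv \<Omega> uh"
  define G where "G = L2norm \<Omega> g"
  have s0: "0 \<le> s" unfolding s_def H1semi_def T_int[OF Om] by (simp add: integral_nonneg_AE)
  have l0: "0 \<le> l" unfolding l_def L2norm_def T_int[OF Om] by (simp add: integral_nonneg_AE)
  have G0: "0 \<le> G" unfolding G_def L2norm_def T_int[OF Om] by (simp add: integral_nonneg_AE)
  have U0: "0 \<le> U" unfolding U_def H1normv_def by (simp add: sum_nonneg)
  have ln: "l \<le> n" "s \<le> n" unfolding l_def n_def s_def by (rule H1norm_ge)+
  have np: "n \<le> Cp * s" using poincare psi0 unfolding n_def s_def by blast
  have E: "intO \<Omega> (\<lambda>x. kappa k0 k1 (\<psi> x) * \<psi> x) + form_c \<Omega> uh \<psi> \<psi> + form_d \<epsilon> \<Omega> \<psi> \<psi> = form_G \<Omega> g \<psi>"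
    using eq psi0 by blast
  have K: "0 \<le> intO \<Omega> (\<lambda>x. kappa k0 k1 (\<psi> x) * \<psi> x)"
    unfolding T_int[OF Om] by (intro integral_nonneg_AE AE_I2 kappa_nonneg k0 k1)
  have D: "form_d \<epsilon> \<Omega> \<psi> \<psi> = \<epsilon> * s\<^sup>2"
    unfolding form_d_def T_int[OF Om] s_def H1_nn(5)[OF Om Hp] by (simp add: power2_norm_eq_inner)
  have measu: "uh \<in> borel_measurable (lebesgue_on \<Omega>)" by (rule vec_meas_H1[OF Om Hu])
  have measg: "wgrad \<Omega> \<psi> \<in> borel_measurable (lebesgue_on \<Omega>)" by (rule H1_nn(3)[OF Om Hp])
  have measp: "\<psi> \<in> borel_measurable (lebesgue_on \<Omega>)" by (rule H1_N(1)[OF Om Hp])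
  have measgg: "g \<in> borel_measurable (lebesgue_on \<Omega>)" by (rule L2_nn(2)[OF Om g_L2])
  have C: "\<bar>form_c \<Omega> uh \<psi> \<psi>\<bar> \<le> (Csob * U) * s * (Csob * n)"
    unfolding form_c_def T_int[OF Om]
  proof (rule enn_bound[OF G_abs])
    have "(\<integral>\<^sup>+x. ennreal \<bar>(uh x \<bullet> wgrad \<Omega> \<psi> x) * \<psi> x\<bar> \<partial>lebesgue_on \<Omega>)
        \<le> (\<integral>\<^sup>+x. ennreal (norm (uh x) * norm (wgrad \<Omega> \<psi> x) * \<bar>\<psi> x\<bar>) \<partial>lebesgue_on \<Omega>)"
    proof (intro nn_integral_mono ennreal_leI)
      fix x
      have "\<bar>uh x \<bullet> wgrad \<Omega> \<psi> x\<bar> \<le> norm (uh x) * norm (wgrad \<Omega> \<psi> x)" by (rule Cauchy_Schwarz_ineq2)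
      then show "\<bar>(uh x \<bullet> wgrad \<Omega> \<psi> x) * \<psi> x\<bar> \<le> norm (uh x) * norm (wgrad \<Omega> \<psi> x) * \<bar>\<psi> x\<bar>"
        by (simp add: abs_mult mult_right_mono)
    qed
    also have "\<dots> \<le> ennreal ((Csob * U) * s * (Csob * n))"
    proof (rule G_T')
      show "(\<integral>\<^sup>+x. ennreal (norm (uh x) ^ 4) \<partial>lebesgue_on \<Omega>) \<le> ennreal ((Csob * U) ^ 4)"
        unfolding U_def by (rule vecL4[OF Om sobolev Hu Cs])
      show "(\<integral>\<^sup>+x. ennreal (\<bar>\<psi> x\<bar> ^ 4) \<partial>lebesgue_on \<Omega>) \<le> ennreal ((Csob * n) ^ 4)"
        using sob_N[OF Om sobolev Hp] unfolding n_def by simp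
      show "(\<integral>\<^sup>+x. ennreal ((norm (wgrad \<Omega> \<psi> x))\<^sup>2) \<partial>lebesgue_on \<Omega>) \<le> ennreal (s\<^sup>2)"
        unfolding s_def H1_nn(2)[OF Om Hp] by simp
    qed (use measu measg measp Cs U0 s0 ln in auto)
    finally show "(\<integral>\<^sup>+x. ennreal \<bar>(uh x \<bullet> wgrad \<Omega> \<psi> x) * \<psi> x\<bar> \<partial>lebesgue_on \<Omega>) \<le> ennreal ((Csob * U) * s * (Csob * n))" .
  qed (use Cs U0 s0 ln in auto)
  have Gg: "\<bar>form_G \<Omega> g \<psi>\<bar> \<le> G * l"
    unfolding form_G_def T_int[OF Om]
  proof (rule enn_bound[OF G_abs])
    have "(\<integral>\<^sup>+x. ennreal \<bar>g x * \<psi> x\<bar> \<partial>lebesgue_on \<Omega>) = (\<integral>\<^sup>+x. ennreal (\<bar>g x\<bar> * \<bar>\<psi> x\<bar>) \<partial>lebesgue_on \<Omega>)"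
      by (simp add: abs_mult)
    also have "\<dots> \<le> ennreal (G * l)"
    proof (rule G_CS')
      show "(\<integral>\<^sup>+x. ennreal (\<bar>g x\<bar>\<^sup>2) \<partial>lebesgue_on \<Omega>) \<le> ennreal (G\<^sup>2)"
        using L2_nn(1)[OF Om g_L2] unfolding G_def by simp
      show "(\<integral>\<^sup>+x. ennreal (\<bar>\<psi> x\<bar>\<^sup>2) \<partial>lebesgue_on \<Omega>) \<le> ennreal (l\<^sup>2)"
        using H1_nn(1)[OF Om Hp] unfolding l_def by simp
    qed (use measgg measp G0 l0 in auto)
    finally show "(\<integral>\<^sup>+x. ennreal \<bar>g x * \<psi> x\<bar> \<partial>lebesgue_on \<Omega>) \<le> ennreal (G * l)" .
  qed (use G0 l0 in auto)
  have h1: "G * l \<le> G * (Cp * s)" using ln np G0 by (intro mult_left_mono) auto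
  have sn: "s * n \<le> (Cp * s) * (Cp * s)" using ln np s0 by (intro mult_mono) auto
  have h2: "(Csob * U) * s * (Csob * n) \<le> (Csob\<^sup>2 * U) * (Cp\<^sup>2 * s\<^sup>2)"
  proof -
    have "(Csob * U) * s * (Csob * n) = (Csob\<^sup>2 * U) * (s * n)" by (simp add: power2_eq_square algebra_simps)
    also have "\<dots> \<le> (Csob\<^sup>2 * U) * ((Cp * s) * (Cp * s))" using sn U0 by (intro mult_left_mono) auto
    also have "\<dots> = (Csob\<^sup>2 * U) * (Cp\<^sup>2 * s\<^sup>2)" by (simp add: power2_eq_square algebra_simps)
    finally show ?thesis .
  qed
  have h3: "(Csob\<^sup>2 * U) * (Cp\<^sup>2 * s\<^sup>2) \<le> \<epsilon> / 2 * s\<^sup>2"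
  proof -
    have "(Csob\<^sup>2 * U) * (Cp\<^sup>2 * s\<^sup>2) = (Cp\<^sup>2 * Csob\<^sup>2 * U) * s\<^sup>2" by (simp add: algebra_simps)
    also have "\<dots> \<le> (\<epsilon> / 2) * s\<^sup>2" using small unfolding U_def by (intro mult_right_mono) auto
    finally show ?thesis .
  qed
  have main: "\<epsilon> * s\<^sup>2 \<le> G * (Cp * s) + \<epsilon> / 2 * s\<^sup>2"
    using E K D C Gg h1 h2 h3 by linarith
  have "n \<le> 2 * Cp\<^sup>2 / \<epsilon> * G" by (rule arith_key[OF main eps s0 np Cp G0])
  then show ?thesis unfolding n_def G_def by simp
qed


lemma kappa_bound:
  assumes K_bounds: "\<forall>s1\<in>{\<alpha>..\<beta>}. \<forall>s2\<in>{\<alpha>..\<beta>}.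
        Klow * \<bar>s1 - s2\<bar> \<le> \<bar>kappa k0 k1 s1 - kappa k0 k1 s2\<bar> \<and>
        \<bar>kappa k0 k1 s1 - kappa k0 k1 s2\<bar> \<le> Kbar * \<bar>s1 - s2\<bar>"
    and ab: "\<alpha> \<le> 0" "0 \<le> \<beta>" and t: "\<alpha> \<le> t" "t \<le> \<beta>"
  shows "\<bar>kappa k0 k1 t\<bar> \<le> Kbar * \<bar>t\<bar>"
proof -
  have "\<bar>kappa k0 k1 t - kappa k0 k1 0\<bar> \<le> Kbar * \<bar>t - 0\<bar>"
    using K_bounds[rule_format, of t 0] ab t by auto
  then show ?thesis unfolding kappa_def by simp
qed

lemma part2:
  fixes u f E :: "real^'n \<Rightarrow> real^'n" and \<psi>h g p :: "real^'n \<Rightarrow> real"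
  assumes Om: "\<Omega> \<in> sets lebesgue" and mu: "\<mu> > 0" and Cs: "Csob > 0" and Cp: "Cp > 0"
    and K: "Kbar > 0" and Eb0: "Ebar \<ge> 0"
    and K_bounds: "\<forall>s1\<in>{\<alpha>..\<beta>}. \<forall>s2\<in>{\<alpha>..\<beta>}.
        Klow * \<bar>s1 - s2\<bar> \<le> \<bar>kappa k0 k1 s1 - kappa k0 k1 s2\<bar> \<and>
        \<bar>kappa k0 k1 s1 - kappa k0 k1 s2\<bar> \<le> Kbar * \<bar>s1 - s2\<bar>"
    and ab: "\<alpha> \<le> 0" "0 \<le> \<beta>"
    and f_L2: "\<forall>i. L2 \<Omega> (comp f i)" and g_L2: "L2 \<Omega> g"
    and E_meas: "\<forall>i. set_borel_measurable lebesgue \<Omega> (comp E i)"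
    and E_bound: "AE x in lebesgue. x \<in> \<Omega> \<longrightarrow> norm (E x) \<le> Ebar"
    and sobolev: "\<forall>\<phi>. H1 \<Omega> \<phi> \<longrightarrow>
        (\<integral>\<^sup>+x. indicator \<Omega> x * ennreal ((\<phi> x)^4) \<partial>lebesgue) \<le> ennreal ((Csob * H1norm \<Omega> \<phi>)^4)"
    and poincare_v: "\<forall>v\<in>Vsp \<Omega> \<Gamma>D. H1normv \<Omega> v \<le> Cp * H1semiv \<Omega> v"
    and psih: "\<psi>h \<in> Phi \<Omega> \<Gamma>D \<alpha> \<beta>" and small: "2 * Cp^2 * Csob^2 * Ebar * H1norm \<Omega> \<psi>h \<le> \<mu>"
    and u: "u \<in> Vsp \<Omega> \<Gamma>D"
    and eqv: "\<forall>v\<in>Vsp \<Omega> \<Gamma>D. form_a \<mu> \<Omega> u v + form_A \<Omega> E \<psi>h u v + form_b \<Omega> v p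
              = form_F \<Omega> (kappa k0 k1) f g E \<psi>h v"
    and bp: "form_b \<Omega> u p = 0"
  shows "H1normv \<Omega> u \<le> 2 * Cp^2 / \<mu> * (L2normv \<Omega> f + Ebar * L2norm \<Omega> g + Kbar * Ebar * H1norm \<Omega> \<psi>h)"
proof -
  have psi0: "\<psi>h \<in> Phi0 \<Omega> \<Gamma>D" using psih unfolding Phi_def by simp
  then have Hp: "H1 \<Omega> \<psi>h" unfolding Phi0_def by simp
  have Hu: "\<And>i. H1 \<Omega> (\<lambda>x. u x $ i)" using u by (rule comp_H1)
  define S where "S = H1semiv \<Omega> u"
  define U where "U = H1normv \<Omega> u"
  define sp where "sp = H1semi \<Omega> \<psi>h"
  define np where "np = H1norm \<Omega> \<psi>h"
  define lp where "lp = L2norm \<Omega> \<psi>h"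
  define Lf where "Lf = L2normv \<Omega> f"
  define G where "G = L2norm \<Omega> g"
  define R where "R = Lf + Ebar * G + Kbar * Ebar * lp"
  have S0: "0 \<le> S" unfolding S_def H1semiv_def by (simp add: sum_nonneg)
  have U0: "0 \<le> U" unfolding U_def H1normv_def by (simp add: sum_nonneg)
  have sp0: "0 \<le> sp" unfolding sp_def H1semi_def T_int[OF Om] by (simp add: integral_nonneg_AE)
  have lp0: "0 \<le> lp" unfolding lp_def L2norm_def T_int[OF Om] by (simp add: integral_nonneg_AE)
  have G0: "0 \<le> G" unfolding G_def L2norm_def T_int[OF Om] by (simp add: integral_nonneg_AE)
  have Lf0: "0 \<le> Lf" unfolding Lf_def L2normv_def T_int[OF Om] by (simp add: integral_nonneg_AE)
  have R0: "0 \<le> R" unfolding R_def using Lf0 G0 lp0 Eb0 K by simp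
  have lnp: "lp \<le> np" "sp \<le> np" unfolding lp_def np_def sp_def by (rule H1norm_ge)+
  have US: "U \<le> Cp * S" using poincare_v u unfolding U_def S_def by blast
  have E1: "form_a \<mu> \<Omega> u u + form_A \<Omega> E \<psi>h u u + form_b \<Omega> u p = form_F \<Omega> (kappa k0 k1) f g E \<psi>h u"
    using eqv u by blast
  have a: "form_a \<mu> \<Omega> u u = \<mu> * S\<^sup>2" unfolding S_def by (rule form_a_self[OF Om Hu])
  have measu: "u \<in> borel_measurable (lebesgue_on \<Omega>)" by (rule vec_meas_H1[OF Om Hu])
  have measg: "wgrad \<Omega> \<psi>h \<in> borel_measurable (lebesgue_on \<Omega>)" by (rule H1_nn(3)[OF Om Hp])
  have measp: "\<psi>h \<in> borel_measurable (lebesgue_on \<Omega>)" by (rule H1_N(1)[OF Om Hp])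
  have measgg: "g \<in> borel_measurable (lebesgue_on \<Omega>)" by (rule L2_nn(2)[OF Om g_L2])
  have measf: "f \<in> borel_measurable (lebesgue_on \<Omega>)" by (rule vecL2_L2(2)[OF Om f_L2])
  have measE: "E \<in> borel_measurable (lebesgue_on \<Omega>)"
  proof (rule vec_meas)
    fix i show "(\<lambda>x. E x $ i) \<in> borel_measurable (lebesgue_on \<Omega>)"
      using E_meas T_meas[OF Om, of "\<lambda>x. E x $ i"] unfolding comp_def by simp
  qed
  have AE_E: "AE x in lebesgue_on \<Omega>. norm (E x) \<le> Ebar" by (rule T_AE[OF Om E_bound])
  have AE_p: "AE x in lebesgue_on \<Omega>. \<alpha> \<le> \<psi>h x \<and> \<psi>h x \<le> \<beta>"
  proof (rule T_AE[OF Om])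
    show "AE x in lebesgue. x \<in> \<Omega> \<longrightarrow> \<alpha> \<le> \<psi>h x \<and> \<psi>h x \<le> \<beta>"
      using psih unfolding Phi_def by simp
  qed
  have Ub: "(\<integral>\<^sup>+x. ennreal ((norm (u x))\<^sup>2) \<partial>lebesgue_on \<Omega>) \<le> ennreal (U\<^sup>2)"
    unfolding U_def by (rule vecL2_H1[OF Om Hu])
  have A: "\<bar>form_A \<Omega> E \<psi>h u u\<bar> \<le> Ebar * ((Csob * U) * sp * (Csob * U))"
    unfolding form_A_def T_int[OF Om]
  proof (rule enn_bound[OF G_abs])
    have "(\<integral>\<^sup>+x. ennreal \<bar>(u x \<bullet> wgrad \<Omega> \<psi>h x) * (E x \<bullet> u x)\<bar> \<partial>lebesgue_on \<Omega>)
        \<le> (\<integral>\<^sup>+x. ennreal Ebar * ennreal (norm (u x) * norm (wgrad \<Omega> \<psi>h x) * norm (u x)) \<partial>lebesgue_on \<Omega>)"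
    proof (rule nn_integral_mono_AE)
      show "AE x in lebesgue_on \<Omega>. ennreal \<bar>(u x \<bullet> wgrad \<Omega> \<psi>h x) * (E x \<bullet> u x)\<bar>
          \<le> ennreal Ebar * ennreal (norm (u x) * norm (wgrad \<Omega> \<psi>h x) * norm (u x))"
        using AE_E
      proof eventually_elim
        case (elim x)
        have 1: "\<bar>u x \<bullet> wgrad \<Omega> \<psi>h x\<bar> \<le> norm (u x) * norm (wgrad \<Omega> \<psi>h x)" by (rule Cauchy_Schwarz_ineq2)
        have "\<bar>E x \<bullet> u x\<bar> \<le> norm (E x) * norm (u x)" by (rule Cauchy_Schwarz_ineq2)
        also have "\<dots> \<le> Ebar * norm (u x)" using elim by (intro mult_right_mono) auto
        finally have 2: "\<bar>E x \<bullet> u x\<bar> \<le> Ebar * norm (u x)" .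
        have "\<bar>(u x \<bullet> wgrad \<Omega> \<psi>h x) * (E x \<bullet> u x)\<bar> \<le> (norm (u x) * norm (wgrad \<Omega> \<psi>h x)) * (Ebar * norm (u x))"
          unfolding abs_mult by (rule mult_mono[OF 1 2]) auto
        also have "\<dots> = Ebar * (norm (u x) * norm (wgrad \<Omega> \<psi>h x) * norm (u x))" by (simp add: algebra_simps)
        finally show ?case using Eb0 by (simp add: ennreal_mult[symmetric] ennreal_leI)
      qed
    qed
    also have "\<dots> = ennreal Ebar * (\<integral>\<^sup>+x. ennreal (norm (u x) * norm (wgrad \<Omega> \<psi>h x) * norm (u x)) \<partial>lebesgue_on \<Omega>)"
      using measu measg by (intro nn_integral_cmult) auto
    also have "\<dots> \<le> ennreal Ebar * ennreal ((Csob * U) * sp * (Csob * U))"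
    proof (intro mult_left_mono)
      show "(\<integral>\<^sup>+x. ennreal (norm (u x) * norm (wgrad \<Omega> \<psi>h x) * norm (u x)) \<partial>lebesgue_on \<Omega>) \<le> ennreal ((Csob * U) * sp * (Csob * U))"
      proof (rule G_T')
        show "(\<integral>\<^sup>+x. ennreal (norm (u x) ^ 4) \<partial>lebesgue_on \<Omega>) \<le> ennreal ((Csob * U) ^ 4)"
          unfolding U_def by (rule vecL4[OF Om sobolev Hu Cs])
        then show "(\<integral>\<^sup>+x. ennreal (norm (u x) ^ 4) \<partial>lebesgue_on \<Omega>) \<le> ennreal ((Csob * U) ^ 4)" .
        show "(\<integral>\<^sup>+x. ennreal ((norm (wgrad \<Omega> \<psi>h x))\<^sup>2) \<partial>lebesgue_on \<Omega>) \<le> ennreal (sp\<^sup>2)"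
          unfolding sp_def H1_nn(2)[OF Om Hp] by simp
      qed (use measu measg Cs U0 sp0 in auto)
    qed auto
    also have "\<dots> = ennreal (Ebar * ((Csob * U) * sp * (Csob * U)))"
      using Eb0 Cs U0 sp0 by (simp add: ennreal_mult)
    finally show "(\<integral>\<^sup>+x. ennreal \<bar>(u x \<bullet> wgrad \<Omega> \<psi>h x) * (E x \<bullet> u x)\<bar> \<partial>lebesgue_on \<Omega>)
        \<le> ennreal (Ebar * ((Csob * U) * sp * (Csob * U)))" .
  qed (use Eb0 Cs U0 sp0 in auto)
  have F: "\<bar>form_F \<Omega> (kappa k0 k1) f g E \<psi>h u\<bar> \<le> R * U"
    unfolding form_F_def T_int[OF Om]
  proof (rule enn_bound[OF G_abs])
    have "(\<integral>\<^sup>+x. ennreal \<bar>(f x + (g x - kappa k0 k1 (\<psi>h x)) *\<^sub>R E x) \<bullet> u x\<bar> \<partial>lebesgue_on \<Omega>)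
        \<le> (\<integral>\<^sup>+x. ennreal (norm (f x) * norm (u x)) + ennreal Ebar * ennreal (\<bar>g x\<bar> * norm (u x))
              + ennreal (Kbar * Ebar) * ennreal (\<bar>\<psi>h x\<bar> * norm (u x)) \<partial>lebesgue_on \<Omega>)"
    proof (rule nn_integral_mono_AE)
      show "AE x in lebesgue_on \<Omega>. ennreal \<bar>(f x + (g x - kappa k0 k1 (\<psi>h x)) *\<^sub>R E x) \<bullet> u x\<bar>
          \<le> ennreal (norm (f x) * norm (u x)) + ennreal Ebar * ennreal (\<bar>g x\<bar> * norm (u x))
              + ennreal (Kbar * Ebar) * ennreal (\<bar>\<psi>h x\<bar> * norm (u x))"
        using AE_E AE_p
      proof eventually_elim
        case (elim x)
        have kb: "\<bar>kappa k0 k1 (\<psi>h x)\<bar> \<le> Kbar * \<bar>\<psi>h x\<bar>"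
          using kappa_bound[OF K_bounds ab] elim by auto
        have gk: "\<bar>g x - kappa k0 k1 (\<psi>h x)\<bar> \<le> \<bar>g x\<bar> + Kbar * \<bar>\<psi>h x\<bar>" using kb by linarith
        have "\<bar>g x - kappa k0 k1 (\<psi>h x)\<bar> * norm (E x) \<le> (\<bar>g x\<bar> + Kbar * \<bar>\<psi>h x\<bar>) * Ebar"
          using gk elim by (intro mult_mono) auto
        moreover have "norm (f x + (g x - kappa k0 k1 (\<psi>h x)) *\<^sub>R E x) \<le> norm (f x) + \<bar>g x - kappa k0 k1 (\<psi>h x)\<bar> * norm (E x)"
          using norm_triangle_ineq[of "f x" "(g x - kappa k0 k1 (\<psi>h x)) *\<^sub>R E x"] by simp
        ultimately have w: "norm (f x + (g x - kappa k0 k1 (\<psi>h x)) *\<^sub>R E x) \<le> norm (f x) + (\<bar>g x\<bar> + Kbar * \<bar>\<psi>h x\<bar>) * Ebar"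
          by linarith
        have "\<bar>(f x + (g x - kappa k0 k1 (\<psi>h x)) *\<^sub>R E x) \<bullet> u x\<bar> \<le> norm (f x + (g x - kappa k0 k1 (\<psi>h x)) *\<^sub>R E x) * norm (u x)"
          by (rule Cauchy_Schwarz_ineq2)
        also have "\<dots> \<le> (norm (f x) + (\<bar>g x\<bar> + Kbar * \<bar>\<psi>h x\<bar>) * Ebar) * norm (u x)"
          using w by (intro mult_right_mono) auto
        also have "\<dots> = norm (f x) * norm (u x) + Ebar * (\<bar>g x\<bar> * norm (u x)) + (Kbar * Ebar) * (\<bar>\<psi>h x\<bar> * norm (u x))"
          by (simp add: algebra_simps)
        finally have r: "\<bar>(f x + (g x - kappa k0 k1 (\<psi>h x)) *\<^sub>R E x) \<bullet> u x\<bar> \<le> norm (f x) * norm (u x) + Ebar * (\<bar>g x\<bar> * norm (u x)) + (Kbar * Ebar) * (\<bar>\<psi>h x\<bar> * norm (u x))" .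
        have "ennreal (norm (f x) * norm (u x) + Ebar * (\<bar>g x\<bar> * norm (u x)) + (Kbar * Ebar) * (\<bar>\<psi>h x\<bar> * norm (u x)))
           = ennreal (norm (f x) * norm (u x)) + ennreal Ebar * ennreal (\<bar>g x\<bar> * norm (u x))
              + ennreal (Kbar * Ebar) * ennreal (\<bar>\<psi>h x\<bar> * norm (u x))"
          using Eb0 K by (simp add: ennreal_plus ennreal_mult)
        then show ?case using r by (metis ennreal_leI)
      qed
    qed
    also have "\<dots> = (\<integral>\<^sup>+x. ennreal (norm (f x) * norm (u x)) \<partial>lebesgue_on \<Omega>)
        + ennreal Ebar * (\<integral>\<^sup>+x. ennreal (\<bar>g x\<bar> * norm (u x)) \<partial>lebesgue_on \<Omega>)
        + ennreal (Kbar * Ebar) * (\<integral>\<^sup>+x. ennreal (\<bar>\<psi>h x\<bar> * norm (u x)) \<partial>lebesgue_on \<Omega>)"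
      using measu measf measgg measp by (simp add: nn_integral_add nn_integral_cmult)
    also have "\<dots> \<le> ennreal (Lf * U) + ennreal Ebar * ennreal (G * U) + ennreal (Kbar * Ebar) * ennreal (lp * U)"
    proof (intro add_mono mult_left_mono)
      show "(\<integral>\<^sup>+x. ennreal (norm (f x) * norm (u x)) \<partial>lebesgue_on \<Omega>) \<le> ennreal (Lf * U)"
        by (rule G_CS'[OF _ _ _ _ _ Ub]) (use measf measu Lf0 U0 vecL2_L2(1)[OF Om f_L2] in \<open>auto simp: Lf_def\<close>)
      show "(\<integral>\<^sup>+x. ennreal (\<bar>g x\<bar> * norm (u x)) \<partial>lebesgue_on \<Omega>) \<le> ennreal (G * U)"
        by (rule G_CS'[OF _ _ _ _ _ Ub]) (use measgg measu G0 U0 L2_nn(1)[OF Om g_L2] in \<open>auto simp: G_def\<close>)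
      show "(\<integral>\<^sup>+x. ennreal (\<bar>\<psi>h x\<bar> * norm (u x)) \<partial>lebesgue_on \<Omega>) \<le> ennreal (lp * U)"
        by (rule G_CS'[OF _ _ _ _ _ Ub]) (use measp measu lp0 U0 H1_nn(1)[OF Om Hp] in \<open>auto simp: lp_def\<close>)
    qed auto
    also have "\<dots> = ennreal (R * U)"
    proof -
      have "R * U = Lf * U + Ebar * (G * U) + (Kbar * Ebar) * (lp * U)" by (simp add: R_def algebra_simps)
      moreover have "ennreal (Lf * U + Ebar * (G * U) + (Kbar * Ebar) * (lp * U)) =
          ennreal (Lf * U) + ennreal Ebar * ennreal (G * U) + ennreal (Kbar * Ebar) * ennreal (lp * U)"
        using Eb0 K Lf0 G0 lp0 U0 by (simp add: ennreal_plus ennreal_mult)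
      ultimately show ?thesis by simp
    qed
    finally show "(\<integral>\<^sup>+x. ennreal \<bar>(f x + (g x - kappa k0 k1 (\<psi>h x)) *\<^sub>R E x) \<bullet> u x\<bar> \<partial>lebesgue_on \<Omega>) \<le> ennreal (R * U)" .
  qed (use R0 U0 in auto)
  have h1: "R * U \<le> R * (Cp * S)" using US R0 by (intro mult_left_mono) auto
  have UU: "U * U \<le> (Cp * S) * (Cp * S)" using US U0 by (intro mult_mono) auto
  have h2: "Ebar * ((Csob * U) * sp * (Csob * U)) \<le> \<mu> / 2 * S\<^sup>2"
  proof -
    have "Ebar * ((Csob * U) * sp * (Csob * U)) = (Ebar * Csob\<^sup>2 * sp) * (U * U)" by (simp add: power2_eq_square algebra_simps)
    also have "\<dots> \<le> (Ebar * Csob\<^sup>2 * np) * ((Cp * S) * (Cp * S))"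
    proof (rule mult_mono[OF _ UU])
      show "Ebar * Csob\<^sup>2 * sp \<le> Ebar * Csob\<^sup>2 * np" using lnp Eb0 by (intro mult_left_mono) auto
      show "0 \<le> Ebar * Csob\<^sup>2 * np" using lnp Eb0 sp0 by simp
    qed simp
    also have "\<dots> = (Cp\<^sup>2 * Csob\<^sup>2 * Ebar * np) * S\<^sup>2" by (simp add: power2_eq_square algebra_simps)
    also have "\<dots> \<le> (\<mu> / 2) * S\<^sup>2" using small unfolding np_def by (intro mult_right_mono) auto
    finally show ?thesis .
  qed
  have main: "\<mu> * S\<^sup>2 \<le> R * (Cp * S) + \<mu> / 2 * S\<^sup>2"
    using E1 a bp A F h1 h2 by linarith
  have "U \<le> 2 * Cp\<^sup>2 / \<mu> * R" by (rule arith_key[OF main mu S0 US Cp R0])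
  also have "\<dots> \<le> 2 * Cp\<^sup>2 / \<mu> * (Lf + Ebar * G + Kbar * Ebar * np)"
  proof (intro mult_left_mono)
    have "Kbar * Ebar * lp \<le> Kbar * Ebar * np" using lnp K Eb0 by (intro mult_left_mono) auto
    then show "R \<le> Lf + Ebar * G + Kbar * Ebar * np" unfolding R_def by simp
  qed (use mu in auto)
  finally show ?thesis unfolding U_def Lf_def G_def np_def by simp
qed


theorem mainTheorem8:
  fixes \<Omega> \<Gamma>D \<Gamma>N :: "(real^'n) set"
    and \<mu> \<epsilon> k0 k1 \<alpha> \<beta> Kbar Klow Ebar Csob Cp :: real
    and f E :: "real^'n \<Rightarrow> real^'n" and g :: "real^'n \<Rightarrow> real"
  assumes dim: "CARD('n) = 2 \<or> CARD('n) = 3"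
    and dom: "lipschitz_domain \<Omega>"
    and bdry: "frontier \<Omega> = \<Gamma>D \<union> \<Gamma>N" and GD_pos: "pos_surface_measure \<Gamma>D"
    and mu: "\<mu> > 0" and eps: "\<epsilon> > 0"
    and f_L2: "\<forall>i. L2 \<Omega> (comp f i)" and g_L2: "L2 \<Omega> g"
    and E_meas: "\<forall>i. set_borel_measurable lebesgue \<Omega> (comp E i)"
    and E_bound: "AE x in lebesgue. x \<in> \<Omega> \<longrightarrow> norm (E x) \<le> Ebar"
    and k0: "k0 > 0" and k1: "k1 > 0"
    and ab: "\<alpha> \<le> 0" "0 \<le> \<beta>" and K: "Kbar > 0" "Klow > 0"
    and K_bounds: "\<forall>s1\<in>{\<alpha>..\<beta>}. \<forall>s2\<in>{\<alpha>..\<beta>}.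
        Klow * \<bar>s1 - s2\<bar> \<le> \<bar>kappa k0 k1 s1 - kappa k0 k1 s2\<bar> \<and>
        \<bar>kappa k0 k1 s1 - kappa k0 k1 s2\<bar> \<le> Kbar * \<bar>s1 - s2\<bar>"
    and Csob: "Csob > 0"
    and sobolev: "\<forall>\<phi>. H1 \<Omega> \<phi> \<longrightarrow>
        (\<integral>\<^sup>+x. indicator \<Omega> x * ennreal ((\<phi> x)^4) \<partial>lebesgue) \<le> ennreal ((Csob * H1norm \<Omega> \<phi>)^4)"
    and Cp: "Cp > 0"
    and poincare: "\<forall>\<phi>\<in>Phi0 \<Omega> \<Gamma>D. H1norm \<Omega> \<phi> \<le> Cp * H1semi \<Omega> \<phi>"
    and poincare_v: "\<forall>v\<in>Vsp \<Omega> \<Gamma>D. H1normv \<Omega> v \<le> Cp * H1semiv \<Omega> v"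
  shows
   "(\<forall>uh\<in>Vsp \<Omega> \<Gamma>D. 2 * Cp^2 * Csob^2 * H1normv \<Omega> uh \<le> \<epsilon> \<longrightarrow>
      (\<forall>\<psi>\<in>Phi \<Omega> \<Gamma>D \<alpha> \<beta>.
         (\<forall>\<phi>\<in>Phi0 \<Omega> \<Gamma>D. intO \<Omega> (\<lambda>x. kappa k0 k1 (\<psi> x) * \<phi> x) + form_c \<Omega> uh \<psi> \<phi>
              + form_d \<epsilon> \<Omega> \<psi> \<phi> = form_G \<Omega> g \<phi>)
         \<longrightarrow> H1norm \<Omega> \<psi> \<le> 2 * Cp^2 / \<epsilon> * L2norm \<Omega> g))
  \<and> (\<forall>\<psi>h\<in>Phi \<Omega> \<Gamma>D \<alpha> \<beta>. 2 * Cp^2 * Csob^2 * Ebar * H1norm \<Omega> \<psi>h \<le> \<mu> \<longrightarrow>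
      (\<forall>u\<in>Vsp \<Omega> \<Gamma>D. \<forall>p. L2 \<Omega> p \<longrightarrow>
         (\<forall>v\<in>Vsp \<Omega> \<Gamma>D. form_a \<mu> \<Omega> u v + form_A \<Omega> E \<psi>h u v + form_b \<Omega> v p
              = form_F \<Omega> (kappa k0 k1) f g E \<psi>h v)
         \<longrightarrow> (\<forall>q. L2 \<Omega> q \<longrightarrow> form_b \<Omega> u q = 0)
         \<longrightarrow> H1normv \<Omega> u \<le> 2 * Cp^2 / \<mu> * (L2normv \<Omega> f + Ebar * L2norm \<Omega> g + Kbar * Ebar * H1norm \<Omega> \<psi>h)))"
proof -
  have Om: "\<Omega> \<in> sets lebesgue" using dom unfolding lipschitz_domain_def by (simp add: open_sets_leb)
  have opn: "open \<Omega>" and ne: "\<Omega> \<noteq> {}" using dom unfolding lipschitz_domain_def by auto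
  have Eb0: "Ebar \<ge> 0"
  proof (rule ccontr)
    assume "\<not> Ebar \<ge> 0"
    then have neg: "Ebar < 0" by simp
    have "AE x\<in>\<Omega> in lebesgue. x \<in> {}"
      using E_bound
    proof eventually_elim
      case (elim x)
      show ?case
      proof
        assume "x \<in> \<Omega>"
        with elim have "norm (E x) \<le> Ebar" by simp
        with neg norm_ge_zero[of "E x"] have False by linarith
        then show "x \<in> {}" ..
      qed
    qed
    moreover obtain x where "x \<in> \<Omega>" using ne by blast
    ultimately have "x \<in> {}" using mem_closed_if_AE_lebesgue_open[OF opn closed_empty] by blast
    then show False by simp
  qed
  show ?thesis
  proof (intro conjI ballI impI allI)
    fix uh \<psi>
    assume "uh \<in> Vsp \<Omega> \<Gamma>D" "2 * Cp^2 * Csob^2 * H1normv \<Omega> uh \<le> \<epsilon>" "\<psi> \<in> Phi \<Omega> \<Gamma>D \<alpha> \<beta>"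
      "\<forall>\<phi>\<in>Phi0 \<Omega> \<Gamma>D. intO \<Omega> (\<lambda>x. kappa k0 k1 (\<psi> x) * \<phi> x) + form_c \<Omega> uh \<psi> \<phi>
              + form_d \<epsilon> \<Omega> \<psi> \<phi> = form_G \<Omega> g \<phi>"
    then show "H1norm \<Omega> \<psi> \<le> 2 * Cp^2 / \<epsilon> * L2norm \<Omega> g"
      by (intro part1[OF Om eps Csob Cp k0 k1 g_L2 sobolev poincare]) auto
  next
    fix \<psi>h u p
    assume "\<psi>h \<in> Phi \<Omega> \<Gamma>D \<alpha> \<beta>" "2 * Cp^2 * Csob^2 * Ebar * H1norm \<Omega> \<psi>h \<le> \<mu>"
      "u \<in> Vsp \<Omega> \<Gamma>D" "L2 \<Omega> p"
      "\<forall>v\<in>Vsp \<Omega> \<Gamma>D. form_a \<mu> \<Omega> u v + form_A \<Omega> E \<psi>h u v + form_b \<Omega> v p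
              = form_F \<Omega> (kappa k0 k1) f g E \<psi>h v"
      "\<forall>q. L2 \<Omega> q \<longrightarrow> form_b \<Omega> u q = 0"
    then show "H1normv \<Omega> u \<le> 2 * Cp^2 / \<mu> * (L2normv \<Omega> f + Ebar * L2norm \<Omega> g + Kbar * Ebar * H1norm \<Omega> \<psi>h)"
      by (intro part2[OF Om mu Csob Cp K(1) Eb0 K_bounds ab f_L2 g_L2 E_meas E_bound sobolev poincare_v]) auto
  qed
qed

end
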